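(* Let $G(z)=\sum_{n=0}^{\infty}\binom{3n}{n}\frac{2z^n}{n+1}$, $|z|<4/27$. Then \[ G(z)=\mathcal{B}_3(z)+\mathcal{B}_3(z)^2, \] where $\mathcal{B}_3(z)=\sum_{n\ge0}\binom{3n+1}{n}\frac{z^n}{3n+1}$, and $G$ satisfies the cubic equation \[ 2-z-(1+2z)G(z)+2zG(z)^2-z^2G(z)^3=0 . \]
   Context: $\mathcal{B}_3(z)=\sum_{n\ge0}\binom{3n+1}{n}\frac{z^n}{3n+1}$ denotes the generating function of the Fuss–Catalan numbers of order 3. It satisfies $\mathcal{B}_3(z)=1+z\mathcal{B}_3(z)^3$. *)

theory Defs
  imports Complex_Main
begin

definition B3 :: "complex \<Rightarrow> complex" where
  "B3 z = (\<Sum>n. of_nat ((3*n+1) choose n) * z ^ n / of_nat (3*n+1))"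

definition G :: "complex \<Rightarrow> complex" where
  "G z = (\<Sum>n. of_nat ((3*n) choose n) * (2 * z ^ n) / of_nat (n+1))"

end

theory Submission
  imports Defs "HOL-Analysis.FPS_Convergence"
begin

no_notation vec_nth (infixl \<open>$\<close> 90)
notation fps_nth (infixl \<open>$\<close> 75)

definition Dop :: "complex fps \<Rightarrow> complex fps" where "Dop f = fps_X * fps_deriv f"

lemma Dop_nth: "Dop f $ n = of_nat n * f $ n"
  by (cases n) (simp_all add: Dop_def)
lemma Dop_add: "Dop (f + g) = Dop f + Dop g" by (simp add: Dop_def algebra_simps)
lemma Dop_diff: "Dop (f - g) = Dop f - Dop g" by (simp add: Dop_def algebra_simps)
lemma Dop_mult: "Dop (f * g) = Dop f * g + f * Dop g" by (simp add: Dop_def algebra_simps)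
lemma Dop_1: "Dop 1 = 0" by (simp add: Dop_def)
lemma Dop_numeral: "Dop (numeral k) = 0" by (simp add: Dop_def)
lemma Dop_X: "Dop fps_X = fps_X" by (simp add: Dop_def)

definition gX :: "complex fps" where "gX = fps_X * inverse ((1 + fps_X)^3)"
definition T :: "complex fps" where "T = fps_inv gX"

lemma gX0: "gX $ 0 = 0" by (simp add: gX_def)
lemma gX1: "gX $ 1 = 1" by (simp add: gX_def fps_nth_power_0)

lemma T0: "T $ 0 = 0" by (simp add: T_def fps_inv_def)

lemma T_eq: "T = fps_X * (1 + T)^3"
proof -
  have "gX oo T = fps_X" unfolding T_def using fps_inv_right[of gX] gX0 gX1 by simp
  moreover have "gX oo T = T * inverse ((1 + T)^3)"
    unfolding gX_def
    by (simp add: fps_compose_mult_distrib[OF T0] fps_inverse_compose[OF T0]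
        fps_compose_power[OF T0, symmetric] fps_compose_add_distrib T0)
  ultimately have e: "T * inverse ((1 + T)^3) = fps_X" by simp
  have P0: "((1 + T)^3) $ 0 \<noteq> 0" using T0 by (simp add: fps_nth_power_0)
  have "T = T * (inverse ((1 + T)^3) * (1 + T)^3)"
    using inverse_mult_eq_1[OF P0] by simp
  also have "\<dots> = fps_X * (1 + T)^3" using e by (simp add: mult.assoc[symmetric])
  finally show ?thesis .
qed

definition Bf :: "complex fps" where "Bf = 1 + T"
definition dB where "dB = Dop Bf"
definition eB where "eB = Dop dB"

lemma Bf0: "Bf $ 0 = 1" by (simp add: Bf_def T0)

lemma R0: "fps_X * Bf^3 = Bf - 1"
  using T_eq unfolding Bf_def by simp

lemma Dop_cube: "Dop (f^3) = 3 * f^2 * Dop f"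
proof -
  have "f^3 = f * (f * f)" by (simp add: power3_eq_cube)
  then show ?thesis by (simp add: Dop_mult power2_eq_square algebra_simps)
qed

lemma R1: "dB = fps_X * Bf^3 + 3 * fps_X * Bf^2 * dB"
proof -
  have "Dop (Bf - 1) = Dop (fps_X * Bf^3)" using R0 by simp
  then show ?thesis by (simp add: Dop_diff Dop_1 Dop_mult Dop_X Dop_cube dB_def algebra_simps)
qed

lemma R2: "(3 - 2*Bf) * dB = Bf^2 - Bf"
  using R0 R1 by algebra

lemma R3: "(3 - 2*Bf) * eB = (2*Bf - 1) * dB + 2 * dB^2"
proof -
  have "Dop ((3 - 2*Bf) * dB) = Dop (Bf^2 - Bf)" using R2 by simp
  then show ?thesis
    by (simp add: Dop_diff Dop_mult Dop_numeral power2_eq_square eB_def dB_def[symmetric] algebra_simps)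
qed

lemma ODE_B_aux: "(4*eB + 2*dB - fps_X*(27*eB + 27*dB + 6*Bf)) * (Bf^3 * (3 - 2*Bf)^3) = 0"
  using R0 R2 R3 by algebra

lemma ODE_H_aux: "(4*(2*dB^2 + (1+2*Bf)*eB) + 2*((1+2*Bf)*dB) - 2*(Bf+Bf^2) + 4
   - fps_X*(27*(2*dB^2 + (1+2*Bf)*eB) + 27*((1+2*Bf)*dB) + 6*(Bf+Bf^2))) * (Bf^3 * (3 - 2*Bf)^3) = 0"
  using R0 R2 R3 by algebra

lemma nz: "Bf^3 * (3 - 2*Bf)^3 \<noteq> 0"
proof -
  have "(Bf^3 * (3 - 2*Bf)^3) $ 0 = 1" by (simp add: fps_mult_nth_0 fps_nth_power_0 Bf0 numeral_fps_const)
  then show ?thesis by auto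
qed

lemma ODE_B: "4*eB + 2*dB - fps_X*(27*eB + 27*dB + 6*Bf) = 0"
  using ODE_B_aux nz by simp

lemma ODE_H: "4*(2*dB^2 + (1+2*Bf)*eB) + 2*((1+2*Bf)*dB) - 2*(Bf+Bf^2) + 4
   - fps_X*(27*(2*dB^2 + (1+2*Bf)*eB) + 27*((1+2*Bf)*dB) + 6*(Bf+Bf^2)) = 0"
  using ODE_H_aux nz by simp

lemma DH: "Dop (Bf + Bf^2) = (1+2*Bf)*dB"
  by (simp add: Dop_add Dop_mult power2_eq_square dB_def algebra_simps)
lemma DDH: "Dop ((1+2*Bf)*dB) = 2*dB^2 + (1+2*Bf)*eB"
  by (simp add: Dop_add Dop_mult Dop_1 Dop_numeral power2_eq_square eB_def dB_def algebra_simps)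

lemma B_rec: "(4* of_nat (Suc m)^2 + 2* of_nat (Suc m)) * Bf$(Suc m) = (27* of_nat m^2 + 27* of_nat m + 6) * Bf$m"
proof -
  have "(4*eB + 2*dB - fps_X*(27*eB + 27*dB + 6*Bf)) $ Suc m = 0" using ODE_B by simp
  then show ?thesis by (simp add: eB_def dB_def Dop_nth numeral_fps_const algebra_simps power2_eq_square)
qed

definition Hf :: "complex fps" where "Hf = Bf + Bf^2"

lemma num_mult_nth: "(numeral k * f) $ n = numeral k * f $ n" for f :: "complex fps"
  by (simp add: numeral_fps_const)

lemma H_rec: "(4 * of_nat (Suc m)^2 + 2 * of_nat (Suc m) - 2) * Hf$(Suc m) = (27 * of_nat m^2 + 27 * of_nat m + 6) * Hf$m"
proof -
  have "(4*Dop (Dop Hf) + 2*Dop Hf - 2*Hf + 4 - fps_X*(27*Dop (Dop Hf) + 27*Dop Hf + 6*Hf)) $ Suc m = 0"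
    unfolding Hf_def by (simp only: DH DDH ODE_H) simp
  then show ?thesis
    by (simp only: fps_sub_nth fps_add_nth fps_X_mult_nth Dop_nth num_mult_nth fps_numeral_nth)
      (simp add: algebra_simps power2_eq_square)
qed

lemma Hf0: "Hf $ 0 = 2" by (simp add: Hf_def Bf0 fps_nth_power_0)

definition cB :: "nat \<Rightarrow> complex" where "cB n = of_nat ((3*n+1) choose n) / of_nat (3*n+1)"
definition cG :: "nat \<Rightarrow> complex" where "cG n = 2 * of_nat ((3*n) choose n) / of_nat (n+1)"

lemma cB_fact: "cB n = fact (3*n) / (fact n * fact (2*n+1))"
proof -
  have "cB n = fact (3*n+1) / (fact n * fact (3*n+1-n)) / of_nat (3*n+1)"
    unfolding cB_def by (subst binomial_fact) auto
  also have "3*n+1-n = 2*n+1" by simp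
  also have "(fact (3*n+1) :: complex) = of_nat (3*n+1) * fact (3*n)"
    by (simp add: fact_Suc)
  finally show ?thesis by (simp del: of_nat_Suc of_nat_add)
qed

lemma cG_fact: "cG n = 2 * fact (3*n) / (fact n * fact (2*n) * of_nat (n+1))"
proof -
  have "cG n = 2 * (fact (3*n) / (fact n * fact (3*n-n))) / of_nat (n+1)"
    unfolding cG_def by (subst binomial_fact) auto
  also have "3*n-n = 2*n" by simp
  finally show ?thesis by (simp add: field_simps)
qed

lemma cnz: "(of_nat n :: complex) = c \<Longrightarrow> n \<noteq> 0 \<Longrightarrow> c \<noteq> 0" by auto

lemma cB_rec: "(4 * of_nat (Suc m)^2 + 2 * of_nat (Suc m)) * cB (Suc m) = (27 * of_nat m^2 + 27 * of_nat m + 6) * cB m"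
proof -
  have e1: "3 * Suc m = Suc (Suc (Suc (3*m)))" by simp
  have e2: "2 * Suc m + 1 = Suc (Suc (2*m+1))" by simp
  have f1: "(fact (3 * Suc m) :: complex) = of_nat (Suc (Suc (Suc (3*m)))) * (of_nat (Suc (Suc (3*m))) * (of_nat (Suc (3*m)) * fact (3*m)))"
    by (simp only: e1 fact_Suc)
  have f2: "(fact (2 * Suc m + 1) :: complex) = of_nat (Suc (Suc (2*m+1))) * (of_nat (Suc (2*m+1)) * fact (2*m+1))"
    by (simp only: e2 fact_Suc)
  have f3: "(fact (Suc m) :: complex) = of_nat (Suc m) * fact m" by (simp only: fact_Suc)
  show ?thesis unfolding cB_fact f1 f2 f3 times_divide_eq_right
    apply (subst frac_eq_eq)
      apply (simp only: mult_eq_0_iff of_nat_eq_0_iff de_Morgan_disj fact_nonzero nat.distinct simp_thms)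
     apply (simp only: mult_eq_0_iff of_nat_eq_0_iff de_Morgan_disj fact_nonzero nat.distinct simp_thms)
    apply (simp only: of_nat_Suc of_nat_add of_nat_mult of_nat_numeral of_nat_1)
    by algebra
qed

lemma cG_rec: "(4 * of_nat (Suc m)^2 + 2 * of_nat (Suc m) - 2) * cG (Suc m) = (27 * of_nat m^2 + 27 * of_nat m + 6) * cG m"
proof -
  have e1: "3 * Suc m = Suc (Suc (Suc (3*m)))" by simp
  have e2: "2 * Suc m = Suc (Suc (2*m))" by simp
  have e3: "Suc m + 1 = Suc (Suc m)" by simp
  have e4: "m + 1 = Suc m" by simp
  have f1: "(fact (3 * Suc m) :: complex) = of_nat (Suc (Suc (Suc (3*m)))) * (of_nat (Suc (Suc (3*m))) * (of_nat (Suc (3*m)) * fact (3*m)))"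
    by (simp only: e1 fact_Suc)
  have f2: "(fact (2 * Suc m) :: complex) = of_nat (Suc (Suc (2*m))) * (of_nat (Suc (2*m)) * fact (2*m))"
    by (simp only: e2 fact_Suc)
  have f3: "(fact (Suc m) :: complex) = of_nat (Suc m) * fact m" by (simp only: fact_Suc)
  show ?thesis unfolding cG_fact f1 f2 f3 e3 e4 times_divide_eq_right
    apply (subst frac_eq_eq)
      apply (simp only: mult_eq_0_iff of_nat_eq_0_iff de_Morgan_disj fact_nonzero nat.distinct simp_thms)
     apply (simp only: mult_eq_0_iff of_nat_eq_0_iff de_Morgan_disj fact_nonzero nat.distinct simp_thms)
    apply (simp only: of_nat_Suc of_nat_add of_nat_mult of_nat_numeral of_nat_1)
    by algebra
qed

lemma Bf_nth: "Bf $ n = cB n"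
proof (induction n)
  case 0 then show ?case by (simp add: Bf0 cB_def)
next
  case (Suc m)
  have nz: "(4 * of_nat (Suc m)^2 + 2 * of_nat (Suc m) :: complex) \<noteq> 0"
  proof -
    have "(4 * of_nat (Suc m)^2 + 2 * of_nat (Suc m) :: complex) = of_nat (4 * (Suc m)^2 + 2 * Suc m)" by simp
    also have "\<dots> \<noteq> 0" by (simp only: of_nat_eq_0_iff) simp
    finally show ?thesis .
  qed
  from B_rec[of m] cB_rec[of m] Suc.IH nz show ?case
    by (metis mult_left_cancel)
qed

lemma Hf_nth: "Hf $ n = cG n"
proof (induction n)
  case 0 then show ?case by (simp add: Hf0 cG_def)
next
  case (Suc m)
  have nz: "(4 * of_nat (Suc m)^2 + 2 * of_nat (Suc m) - 2 :: complex) \<noteq> 0"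
  proof -
    have "(4 * of_nat (Suc m)^2 + 2 * of_nat (Suc m) - 2 :: complex) = of_nat (4 * (Suc m)^2 + 2 * m)" by (simp add: algebra_simps power2_eq_square)
    also have "\<dots> \<noteq> 0" by (simp only: of_nat_eq_0_iff) simp
    finally show ?thesis .
  qed
  from H_rec[of m] cG_rec[of m] Suc.IH nz show ?case
    by (metis mult_left_cancel)
qed

lemma cB_bound: "norm (cB n) \<le> (27/4)^n"
proof (induction n)
  case 0 then show ?case by (simp add: cB_def)
next
  case (Suc m)
  define A where "A = (27 * m^2 + 27 * m + 6 :: nat)"
  define D where "D = (4 * (Suc m)^2 + 2 * Suc m :: nat)"
  have "(of_nat D :: complex) * cB (Suc m) = of_nat A * cB m"
    using cB_rec[of m] unfolding A_def D_def by (simp add: algebra_simps)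
  then have eq: "real D * norm (cB (Suc m)) = real A * norm (cB m)"
    by (metis norm_mult norm_of_nat)
  have AD: "4 * real A \<le> 27 * real D"
  proof -
    have "4 * A \<le> 27 * D" unfolding A_def D_def by (simp add: power2_eq_square algebra_simps)
    then show ?thesis by (metis (mono_tags) of_nat_le_iff of_nat_mult of_nat_numeral)
  qed
  have "D > 0" unfolding D_def by simp
  then have Dpos: "real D > 0" by simp
  have "real D * norm (cB (Suc m)) \<le> real A * (27/4)^m"
    unfolding eq by (rule mult_left_mono[OF Suc.IH]) simp
  also have "\<dots> \<le> real D * (27/4)^Suc m"
  proof -
    have "real A * (27/4)^m = (4 * real A) * (27/4)^m / 4" by simp
    also have "\<dots> \<le> (27 * real D) * (27/4)^m / 4"
      by (intro divide_right_mono mult_right_mono AD) simp_all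
    also have "\<dots> = real D * (27/4)^Suc m" by simp
    finally show ?thesis .
  qed
  finally show ?case using Dpos by (simp add: mult_le_cancel_left_pos)
qed

lemma Bf_radius: "fps_conv_radius Bf \<ge> ereal (4/27)"
  unfolding fps_conv_radius_def
proof (rule conv_radius_geI_ex')
  fix r :: real assume r: "0 < r" "ereal r < ereal (4/27)"
  then have r': "r < 4/27" by simp
  show "summable (\<lambda>n. fps_nth Bf n * of_real r ^ n)"
  proof (rule summable_comparison_test)
    show "\<exists>N. \<forall>n\<ge>N. norm (fps_nth Bf n * of_real r ^ n) \<le> (27/4 * r)^n"
    proof (intro exI allI impI)
      fix n :: nat
      have "norm (fps_nth Bf n * of_real r ^ n) = norm (cB n) * r^n"
        using r by (simp add: Bf_nth norm_mult norm_power)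
      also have "\<dots> \<le> (27/4)^n * r^n"
        using r by (intro mult_right_mono cB_bound) simp
      also have "\<dots> = (27/4 * r)^n" by (metis power_mult_distrib)
      finally show "norm (fps_nth Bf n * of_real r ^ n) \<le> (27/4 * r)^n" .
    qed
    show "summable (\<lambda>n. (27/4 * r)^n)"
      using r r' by (intro summable_geometric) simp
  qed
qed

theorem mainTheorem2:
  fixes z :: complex
  assumes "norm z < 4/27"
  shows "G z = B3 z + (B3 z)^2 \<and>
         2 - z - (1 + 2*z) * G z + 2*z * (G z)^2 - z^2 * (G z)^3 = 0"
proof -
  have rB: "ereal (norm z) < fps_conv_radius Bf"
  proof -
    have "ereal (norm z) < ereal (4/27)" using assms by simp
    then show ?thesis using Bf_radius by (rule less_le_trans)
  qed
  have r2: "ereal (norm z) < fps_conv_radius (Bf^n)" for n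
    using rB fps_conv_radius_power[of Bf n] by (rule less_le_trans)
  have r3: "ereal (norm z) < fps_conv_radius (fps_X * Bf^3)"
    using fps_conv_radius_mult[of fps_X "Bf^3"] r2[of 3] by (simp add: less_le_trans)
  have evB: "eval_fps Bf z = B3 z"
    unfolding eval_fps_def B3_def by (simp add: Bf_nth cB_def)
  have evH: "eval_fps Hf z = G z"
    unfolding eval_fps_def G_def by (simp add: Hf_nth cG_def mult.assoc mult.left_commute)
  have "eval_fps Hf z = eval_fps Bf z + eval_fps Bf z ^ 2"
    unfolding Hf_def using rB r2[of 2] by (simp add: eval_fps_add eval_fps_power)
  then have G1: "G z = B3 z + (B3 z)^2" using evB evH by simp
  have "Bf = 1 + fps_X * Bf^3" using R0 by simp
  then have "eval_fps Bf z = eval_fps (1 + fps_X * Bf^3) z" by simp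
  also have "\<dots> = 1 + z * eval_fps Bf z ^ 3"
    using r3 rB r2[of 3] by (simp add: eval_fps_add eval_fps_mult eval_fps_power)
  finally have Beq: "B3 z = 1 + z * B3 z ^ 3" using evB by simp
  define b where "b = B3 z"
  have bz: "b \<noteq> 0" using Beq unfolding b_def by auto
  have Beq': "z * b^3 = b - 1" using Beq unfolding b_def by (simp add: algebra_simps)
  have "b * (2 - z - (1 + 2*z) * (b + b^2) + 2*z * (b + b^2)^2 - z^2 * (b + b^2)^3) = 0"
    using Beq' by algebra
  then have "2 - z - (1 + 2*z) * G z + 2*z * (G z)^2 - z^2 * (G z)^3 = 0"
    using bz G1 unfolding b_def by simp
  with G1 show ?thesis by simp
qed

end
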